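(* Let $G$ be a graph, let $C=a_{1}a_{2}a_{3}a_{1}$ be a triangle of $G$, and let $M_{1},M_{2}$ be two paths in $G$ each with exactly $2$ vertices (i.e. edges). Suppose $C$, $M_{1}$, $M_{2}$ are pairwise vertex-disjoint and $e(V(C),V(M_{1})\cup V(M_{2}))\geq 9$. Then $G[V(C)\cup V(M_{1})\cup V(M_{2})]$ contains vertex-disjoint subgraphs $C'$ and $D$, where $C'$ is a triangle and $D$ has exactly $4$ vertices and at least $4$ edges.
   Context: All graphs are finite, simple and undirected. For disjoint vertex sets $L,M$, $e(L,M)$ is the number of edges of $G$ with one end in $L$ and the other in $M$. For $U\subseteq V(G)$, $G[U]$ is the subgraph induced by $U$. *)

theory Defs
  imports Main
begin

definition simple_graph :: "'a set \<Rightarrow> ('a \<Rightarrow> 'a \<Rightarrow> bool) \<Rightarrow> bool" where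
  "simple_graph V E \<longleftrightarrow> finite V \<and> (\<forall>x y. E x y \<longrightarrow> x \<in> V \<and> y \<in> V) \<and>
     (\<forall>x y. E x y \<longrightarrow> E y x) \<and> (\<forall>x. \<not> E x x)"

definition e_between :: "('a \<Rightarrow> 'a \<Rightarrow> bool) \<Rightarrow> 'a set \<Rightarrow> 'a set \<Rightarrow> nat" where
  "e_between E L M = card {(x, y). x \<in> L \<and> y \<in> M \<and> E x y}"

definition induced_edges :: "('a \<Rightarrow> 'a \<Rightarrow> bool) \<Rightarrow> 'a set \<Rightarrow> 'a set set" where
  "induced_edges E U = {{x, y} | x y. x \<in> U \<and> y \<in> U \<and> E x y}"

end

theory Submission
  imports Defs
begin

lemma core:
  fixes r1 r2 r3 q1 q2 q3 :: nat
  assumes "r1 \<le> 2" "r2 \<le> 2" "r3 \<le> 2" "q1 \<le> 2" "q2 \<le> 2" "q3 \<le> 2"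
   "9 \<le> r1+r2+r3+q1+q2+q3"
  shows "(r1 = 2 \<and> 2 \<le> q2+q3) \<or> (r2 = 2 \<and> 2 \<le> q1+q3) \<or> (r3 = 2 \<and> 2 \<le> q1+q2)
   \<or> (q1 = 2 \<and> 2 \<le> r2+r3) \<or> (q2 = 2 \<and> 2 \<le> r1+r3) \<or> (q3 = 2 \<and> 2 \<le> r1+r2)"
  using assms by arith

lemma four:
  assumes "finite S" "s1 \<in> S" "s2 \<in> S" "s3 \<in> S" "s4 \<in> S"
    "s1 \<noteq> s2" "s1 \<noteq> s3" "s1 \<noteq> s4" "s2 \<noteq> s3" "s2 \<noteq> s4" "s3 \<noteq> s4"
  shows "4 \<le> card S"
proof -
  have "card {s1,s2,s3,s4} = 4" using assms by simp
  moreover have "card {s1,s2,s3,s4} \<le> card S" using assms by (intro card_mono) auto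
  ultimately show ?thesis by simp
qed

lemma ie_mem: "x \<in> U \<Longrightarrow> y \<in> U \<Longrightarrow> E x y \<Longrightarrow> {x, y} \<in> induced_edges E U"
  unfolding induced_edges_def by blast

lemma DL:
  fixes E :: "'a \<Rightarrow> 'a \<Rightarrow> bool"
  assumes d: "distinct [w,x,y,z]" and e: "E w x" "E y z"
    and two: "2 \<le> of_bool (E w y) + of_bool (E w z) + of_bool (E x y) + (of_bool (E x z) :: nat)"
  shows "4 \<le> card (induced_edges E {w,x,y,z})"
proof -
  let ?U = "{w,x,y,z}"
  have fin: "finite (induced_edges E ?U)"
    by (rule finite_subset[of _ "Pow ?U"]) (auto simp: induced_edges_def)
  have m1: "{w,x} \<in> induced_edges E ?U" and m2: "{y,z} \<in> induced_edges E ?U"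
    using e by (auto intro: ie_mem)
  show ?thesis
  proof (cases "E w y")
    case True
    then have m3: "{w,y} \<in> induced_edges E ?U" by (auto intro: ie_mem)
    show ?thesis
    proof (cases "E w z")
      case True
      then have "{w,z} \<in> induced_edges E ?U" by (auto intro: ie_mem)
      then show ?thesis using four[OF fin m1 m2 m3] d by (auto simp: doubleton_eq_iff)
    next
      case f1: False
      show ?thesis
      proof (cases "E x y")
        case True
        then have "{x,y} \<in> induced_edges E ?U" by (auto intro: ie_mem)
        then show ?thesis using four[OF fin m1 m2 m3] d by (auto simp: doubleton_eq_iff)
      next
        case False
        then have "E x z" using two f1 \<open>E w y\<close> by (cases "E x z") auto
        then have "{x,z} \<in> induced_edges E ?U" by (auto intro: ie_mem)
        then show ?thesis using four[OF fin m1 m2 m3] d by (auto simp: doubleton_eq_iff)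
      qed
    qed
  next
    case f0: False
    show ?thesis
    proof (cases "E w z")
      case True
      then have m3: "{w,z} \<in> induced_edges E ?U" by (auto intro: ie_mem)
      show ?thesis
      proof (cases "E x y")
        case True
        then have "{x,y} \<in> induced_edges E ?U" by (auto intro: ie_mem)
        then show ?thesis using four[OF fin m1 m2 m3] d by (auto simp: doubleton_eq_iff)
      next
        case False
        then have "E x z" using two f0 \<open>E w z\<close> by (cases "E x z") auto
        then have "{x,z} \<in> induced_edges E ?U" by (auto intro: ie_mem)
        then show ?thesis using four[OF fin m1 m2 m3] d by (auto simp: doubleton_eq_iff)
      qed
    next
      case False
      then have "E x y" "E x z" using two f0 by (cases "E x y"; cases "E x z"; auto)+
      then have m3: "{x,y} \<in> induced_edges E ?U" "{x,z} \<in> induced_edges E ?U" by (auto intro: ie_mem)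
      then show ?thesis using four[OF fin m1 m2 m3] d by (auto simp: doubleton_eq_iff)
    qed
  qed
qed

lemma ebsum:
  assumes "finite A" "finite B"
  shows "e_between E A B = (\<Sum>x\<in>A. \<Sum>y\<in>B. of_bool (E x y))"
proof -
  have "{(x, y). x \<in> A \<and> y \<in> B \<and> E x y} = Sigma A (\<lambda>x. B \<inter> {y. E x y})" by auto
  then show ?thesis unfolding e_between_def using assms by simp
qed

lemma option:
  fixes E :: "'a \<Rightarrow> 'a \<Rightarrow> bool"
  assumes sym: "\<And>x y. E x y \<Longrightarrow> E y x"
    and d: "distinct [a,b,c,u,v,p,q]"
    and t: "E a u" "E a v" "E u v" "E b c" "E p q"
    and two: "2 \<le> of_bool (E b p) + of_bool (E b q) + of_bool (E c p) + (of_bool (E c q) :: nat)"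
    and S: "{a,b,c,u,v,p,q} = W"
  shows "\<exists>T D. T \<subseteq> W \<and> D \<subseteq> W
     \<and> T \<inter> D = {} \<and> card T = 3 \<and> (\<forall>x\<in>T. \<forall>y\<in>T. x \<noteq> y \<longrightarrow> E x y)
     \<and> card D = 4 \<and> card (induced_edges E D) \<ge> 4"
proof (intro exI conjI)
  show "{a,u,v} \<subseteq> W" "{b,c,p,q} \<subseteq> W" using S by auto
  show "{a,u,v} \<inter> {b,c,p,q} = {}" using d by auto
  show "card {a,u,v} = 3" "card {b,c,p,q} = 4" using d by auto
  show "\<forall>x\<in>{a,u,v}. \<forall>y\<in>{a,u,v}. x \<noteq> y \<longrightarrow> E x y" using t sym by auto
  show "4 \<le> card (induced_edges E {b,c,p,q})"
    by (rule DL[OF _ t(4) t(5) two]) (use d in simp)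
qed

theorem lemma5:
  fixes V :: "'a set" and E :: "'a \<Rightarrow> 'a \<Rightarrow> bool"
    and a1 a2 a3 u1 v1 u2 v2 :: 'a
  assumes G: "simple_graph V E"
    and C: "E a1 a2" "E a2 a3" "E a3 a1"
    and M1: "E u1 v1" and M2: "E u2 v2"
    and disj: "card {a1, a2, a3, u1, v1, u2, v2} = 7"
    and nine: "e_between E {a1, a2, a3} {u1, v1, u2, v2} \<ge> 9"
  shows "\<exists>T D. T \<subseteq> {a1, a2, a3, u1, v1, u2, v2} \<and> D \<subseteq> {a1, a2, a3, u1, v1, u2, v2}
     \<and> T \<inter> D = {} \<and> card T = 3 \<and> (\<forall>x\<in>T. \<forall>y\<in>T. x \<noteq> y \<longrightarrow> E x y)
     \<and> card D = 4 \<and> card (induced_edges E D) \<ge> 4"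
proof -
  have sym: "\<And>x y. E x y \<Longrightarrow> E y x" using G unfolding simple_graph_def by blast
  have "card (set [a1, a2, a3, u1, v1, u2, v2]) = length [a1, a2, a3, u1, v1, u2, v2]"
    using disj by simp
  then have d: "distinct [a1, a2, a3, u1, v1, u2, v2]" by (rule card_distinct)
  define r1 where "r1 = of_bool (E a1 u1) + (of_bool (E a1 v1) :: nat)"
  define r2 where "r2 = of_bool (E a2 u1) + (of_bool (E a2 v1) :: nat)"
  define r3 where "r3 = of_bool (E a3 u1) + (of_bool (E a3 v1) :: nat)"
  define q1 where "q1 = of_bool (E a1 u2) + (of_bool (E a1 v2) :: nat)"
  define q2 where "q2 = of_bool (E a2 u2) + (of_bool (E a2 v2) :: nat)"
  define q3 where "q3 = of_bool (E a3 u2) + (of_bool (E a3 v2) :: nat)"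
  have "e_between E {a1, a2, a3} {u1, v1, u2, v2} = r1+r2+r3+q1+q2+q3"
  proof -
    have "e_between E {a1, a2, a3} {u1, v1, u2, v2} = (\<Sum>x\<in>{a1, a2, a3}. \<Sum>y\<in>{u1, v1, u2, v2}. of_bool (E x y))"
      by (rule ebsum) auto
    also have "\<dots> = r1+r2+r3+q1+q2+q3"
      using d by (simp add: r1_def r2_def r3_def q1_def q2_def q3_def ac_simps del: sum_of_bool_eq split del: split_of_bool)
    finally show ?thesis .
  qed
  with nine have n9: "9 \<le> r1+r2+r3+q1+q2+q3" by simp
  have bnd: "r1 \<le> 2" "r2 \<le> 2" "r3 \<le> 2" "q1 \<le> 2" "q2 \<le> 2" "q3 \<le> 2"
    by (simp_all add: r1_def r2_def r3_def q1_def q2_def q3_def)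
  have cases: "(r1 = 2 \<and> 2 \<le> q2+q3) \<or> (r2 = 2 \<and> 2 \<le> q1+q3) \<or> (r3 = 2 \<and> 2 \<le> q1+q2)
   \<or> (q1 = 2 \<and> 2 \<le> r2+r3) \<or> (q2 = 2 \<and> 2 \<le> r1+r3) \<or> (q3 = 2 \<and> 2 \<le> r1+r2)"
    by (rule core[OF bnd n9])
  have two: "\<And>P Q. (of_bool P + (of_bool Q :: nat) = 2) = (P \<and> Q)" by auto
  from cases show ?thesis
  proof (elim disjE conjE)
    assume h1: "r1 = 2" and h2: "2 \<le> q2 + q3"
    have e1: "E a1 u1" "E a1 v1" using h1 by (simp_all add: r1_def two)
    have s2: "q2 + q3 = of_bool (E a2 u2) + of_bool (E a2 v2) + of_bool (E a3 u2) + (of_bool (E a3 v2) :: nat)"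
      by (simp add: q2_def q3_def add.assoc split del: split_of_bool)
    have dd: "distinct [a1,a2,a3,u1,v1,u2,v2]" using d by auto
    have S: "{a1,a2,a3,u1,v1,u2,v2} = {a1, a2, a3, u1, v1, u2, v2}" by auto
    have tw: "2 \<le> of_bool (E a2 u2) + of_bool (E a2 v2) + of_bool (E a3 u2) + (of_bool (E a3 v2) :: nat)"
      by (subst s2[symmetric]) (rule h2)
    show ?thesis
      by (rule option[of E a1 a2 a3 u1 v1 u2 v2, OF sym dd e1 _ _ _ tw S]) (use C M1 M2 sym in blast)+
  next
    assume h1: "r2 = 2" and h2: "2 \<le> q1 + q3"
    have e1: "E a2 u1" "E a2 v1" using h1 by (simp_all add: r2_def two)
    have s2: "q1 + q3 = of_bool (E a1 u2) + of_bool (E a1 v2) + of_bool (E a3 u2) + (of_bool (E a3 v2) :: nat)"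
      by (simp add: q1_def q3_def add.assoc split del: split_of_bool)
    have dd: "distinct [a2,a1,a3,u1,v1,u2,v2]" using d by auto
    have S: "{a2,a1,a3,u1,v1,u2,v2} = {a1, a2, a3, u1, v1, u2, v2}" by auto
    have tw: "2 \<le> of_bool (E a1 u2) + of_bool (E a1 v2) + of_bool (E a3 u2) + (of_bool (E a3 v2) :: nat)"
      by (subst s2[symmetric]) (rule h2)
    show ?thesis
      by (rule option[of E a2 a1 a3 u1 v1 u2 v2, OF sym dd e1 _ _ _ tw S]) (use C M1 M2 sym in blast)+
  next
    assume h1: "r3 = 2" and h2: "2 \<le> q1 + q2"
    have e1: "E a3 u1" "E a3 v1" using h1 by (simp_all add: r3_def two)
    have s2: "q1 + q2 = of_bool (E a1 u2) + of_bool (E a1 v2) + of_bool (E a2 u2) + (of_bool (E a2 v2) :: nat)"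
      by (simp add: q1_def q2_def add.assoc split del: split_of_bool)
    have dd: "distinct [a3,a1,a2,u1,v1,u2,v2]" using d by auto
    have S: "{a3,a1,a2,u1,v1,u2,v2} = {a1, a2, a3, u1, v1, u2, v2}" by auto
    have tw: "2 \<le> of_bool (E a1 u2) + of_bool (E a1 v2) + of_bool (E a2 u2) + (of_bool (E a2 v2) :: nat)"
      by (subst s2[symmetric]) (rule h2)
    show ?thesis
      by (rule option[of E a3 a1 a2 u1 v1 u2 v2, OF sym dd e1 _ _ _ tw S]) (use C M1 M2 sym in blast)+
  next
    assume h1: "q1 = 2" and h2: "2 \<le> r2 + r3"
    have e1: "E a1 u2" "E a1 v2" using h1 by (simp_all add: q1_def two)
    have s2: "r2 + r3 = of_bool (E a2 u1) + of_bool (E a2 v1) + of_bool (E a3 u1) + (of_bool (E a3 v1) :: nat)"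
      by (simp add: r2_def r3_def add.assoc split del: split_of_bool)
    have dd: "distinct [a1,a2,a3,u2,v2,u1,v1]" using d by auto
    have S: "{a1,a2,a3,u2,v2,u1,v1} = {a1, a2, a3, u1, v1, u2, v2}" by auto
    have tw: "2 \<le> of_bool (E a2 u1) + of_bool (E a2 v1) + of_bool (E a3 u1) + (of_bool (E a3 v1) :: nat)"
      by (subst s2[symmetric]) (rule h2)
    show ?thesis
      by (rule option[of E a1 a2 a3 u2 v2 u1 v1, OF sym dd e1 _ _ _ tw S]) (use C M1 M2 sym in blast)+
  next
    assume h1: "q2 = 2" and h2: "2 \<le> r1 + r3"
    have e1: "E a2 u2" "E a2 v2" using h1 by (simp_all add: q2_def two)
    have s2: "r1 + r3 = of_bool (E a1 u1) + of_bool (E a1 v1) + of_bool (E a3 u1) + (of_bool (E a3 v1) :: nat)"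
      by (simp add: r1_def r3_def add.assoc split del: split_of_bool)
    have dd: "distinct [a2,a1,a3,u2,v2,u1,v1]" using d by auto
    have S: "{a2,a1,a3,u2,v2,u1,v1} = {a1, a2, a3, u1, v1, u2, v2}" by auto
    have tw: "2 \<le> of_bool (E a1 u1) + of_bool (E a1 v1) + of_bool (E a3 u1) + (of_bool (E a3 v1) :: nat)"
      by (subst s2[symmetric]) (rule h2)
    show ?thesis
      by (rule option[of E a2 a1 a3 u2 v2 u1 v1, OF sym dd e1 _ _ _ tw S]) (use C M1 M2 sym in blast)+
  next
    assume h1: "q3 = 2" and h2: "2 \<le> r1 + r2"
    have e1: "E a3 u2" "E a3 v2" using h1 by (simp_all add: q3_def two)
    have s2: "r1 + r2 = of_bool (E a1 u1) + of_bool (E a1 v1) + of_bool (E a2 u1) + (of_bool (E a2 v1) :: nat)"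
      by (simp add: r1_def r2_def add.assoc split del: split_of_bool)
    have dd: "distinct [a3,a1,a2,u2,v2,u1,v1]" using d by auto
    have S: "{a3,a1,a2,u2,v2,u1,v1} = {a1, a2, a3, u1, v1, u2, v2}" by auto
    have tw: "2 \<le> of_bool (E a1 u1) + of_bool (E a1 v1) + of_bool (E a2 u1) + (of_bool (E a2 v1) :: nat)"
      by (subst s2[symmetric]) (rule h2)
    show ?thesis
      by (rule option[of E a3 a1 a2 u2 v2 u1 v1, OF sym dd e1 _ _ _ tw S]) (use C M1 M2 sym in blast)+
  qed
qed

end
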